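(* Let $n\ge 3$ be an integer. Let $F_k$ be the Fibonacci numbers ($F_0=0$, $F_1=1$, $F_{k+2}=F_k+F_{k+1}$) and $L_k$ the Lucas numbers ($L_1=1$, $L_2=3$, $L_{k+2}=L_k+L_{k+1}$). Set $d=\gcd(F_{n-2}+1,F_{n-1}-1)$, $\mu=(F_{n-1}-1)/d$, $\nu=(F_{n-2}+1)/d$ and $t=(L_n-1-(-1)^n)/d$. For given $r,s$ put $h=-(s\mu+r\nu)d$. Then: (i) if $n\equiv 0\pmod 4$: $d=F_{n/2}$, $t=5F_{n/2}$, and for $r=F_{n/2-1}$, $s=-F_{n/2-2}$ one has $r\mu+s(\mu+\nu)=1$ and $h=-2F_{n/2}$; (ii) if $n\equiv 2\pmod 4$: $d=L_{n/2}$, $t=L_{n/2}$, and for $r=F_{n/2-2}$, $s=-F_{n/2-3}$ one has $r\mu+s(\mu+\nu)=1$ and $h=-L_{n/2}$; (iii) if $n\equiv 1,5,7,$ or $11\pmod{12}$: $d=1$, $t=L_n$, and for $r=(F_{n-2}-1)/2$, $s=(1-F_{n-3})/2$ (rational numbers) one has $r\mu+s(\mu+\nu)=1$ and $h=(1-L_{n-2})/2$; (iv) if $n\equiv 3$ or $9\pmod{12}$: $d=2$, $t=L_n/2$, and for $r=F_{n-2}-1$, $s=1-F_{n-3}$ one has $r\mu+s(\mu+\nu)=1$ and $h=1-L_{n-2}$. *)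

theory Defs
  imports "HOL-Number_Theory.Fib" Complex_Main
begin

fun lucas :: "nat \<Rightarrow> int" where
  "lucas 0 = 2"
| "lucas (Suc 0) = 1"
| "lucas (Suc (Suc k)) = lucas k + lucas (Suc k)"

abbreviation F :: "nat \<Rightarrow> int" where "F k \<equiv> int (fib k)"

definition dd :: "nat \<Rightarrow> int" where
  "dd n = gcd (F (n - 2) + 1) (F (n - 1) - 1)"

definition mu :: "nat \<Rightarrow> rat" where
  "mu n = of_int (F (n - 1) - 1) / of_int (dd n)"

definition nu :: "nat \<Rightarrow> rat" where
  "nu n = of_int (F (n - 2) + 1) / of_int (dd n)"

definition tt :: "nat \<Rightarrow> rat" where
  "tt n = of_int (lucas n - 1 - (-1) ^ n) / of_int (dd n)"

definition hh :: "nat \<Rightarrow> rat \<Rightarrow> rat \<Rightarrow> rat" where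
  "hh n r s = - (s * mu n + r * nu n) * of_int (dd n)"

end

theory Submission
  imports Defs
begin

lemma fibs: "F (k+2) = F k + F (k+1)"
  by (simp add: fib_plus_2)

lemma fibs3: "i = k+2 \<Longrightarrow> l = k+1 \<Longrightarrow> F i = F k + F l"
  using fibs by simp

lemma lucas_F: "lucas k = 2 * F (Suc k) - F k"
  by (induction k rule: lucas.induct) (auto simp: algebra_simps)

lemma fib_even3: "even (fib k) \<longleftrightarrow> 3 dvd k"
proof (induction k rule: less_induct)
  case (less k)
  show ?case
  proof (cases "k < 3")
    case True
    then have "k = 0 \<or> k = 1 \<or> k = 2" by auto
    moreover have "\<not> 3 dvd (1::nat)" "\<not> 3 dvd (2::nat)" by auto
    ultimately show ?thesis by auto
  next
    case False
    then obtain m where m: "k = m + 3" by (metis add.commute le_Suc_ex not_less)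
    have "fib (m+3) = 2 * fib (m+1) + fib m"
      using fib_plus_2[of m] fib_plus_2[of "m+1"] by (simp add: numeral_3_eq_3 numeral_2_eq_2)
    then have "even (fib k) = even (fib m)" using m by simp
    also have "\<dots> = (3 dvd m)" using less m by simp
    finally show ?thesis using m by simp
  qed
qed

lemma gcd_bez:
  fixes x y d P Q u v :: int
  assumes "x = d*P" "y = d*Q" "u*P + v*Q = 1" "d \<ge> 0"
  shows "gcd x y = d"
proof -
  have "gcd P Q dvd u*P + v*Q" by simp
  then have "gcd P Q dvd 1" using assms(3) by simp
  then have "gcd P Q = 1" by simp
  then show ?thesis using gcd_mult_distrib_int[of d P Q] assms by simp
qed

lemma basics:
  fixes j :: nat
  defines "a \<equiv> F j" and "b \<equiv> F (j+1)"
  assumes "even j"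
  shows "F (j+2) = a + b" "(a+b)*a - b^2 = -1"
    "F (2*j+1) = b^2 + a^2" "F (2*j+2) = (a+b)*b + b*a" "b > 0"
proof -
  show f2: "F (j+2) = a + b" unfolding a_def b_def by (simp add: fibs)
  have "F (Suc (Suc j)) * F j - F (Suc j)^2 = -1" using fib_Cassini_int[of j] assms(3) by simp
  moreover have "F (Suc (Suc j)) = a + b" using f2 by simp
  moreover have "F (Suc j) = b" unfolding b_def by simp
  ultimately show "(a+b)*a - b^2 = -1" unfolding a_def by (simp add: add.commute)
  show "F (2*j+1) = b^2 + a^2" using fib_add[of j j] unfolding a_def b_def
    by (simp add: power2_eq_square mult_2)
  have e: "Suc (j+1+j) = 2*j+2" "Suc (j+1) = j+2" "Suc j = j+1" by simp_all
  have "fib (2*j+2) = fib (j+1) * fib (j+2) + fib j * fib (j+1)"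
    using fib_add[of "j+1" j] unfolding e .
  then have "F (2*j+2) = F (j+1) * F (j+2) + F j * F (j+1)"
    by (metis of_nat_add of_nat_mult)
  then show "F (2*j+2) = (a+b)*b + b*a" unfolding f2 a_def[symmetric] b_def[symmetric]
    by (simp add: algebra_simps)
  show "b > 0" unfolding b_def using fib_neq_0_nat[of "j+1"] by simp
qed

lemma case1:
  assumes n: "n = 2*j+4" and ej: "even j"
  shows "let r = of_int (F (n div 2 - 1)); s = - of_int (F (n div 2 - 2)) in
        dd n = F (n div 2) \<and> tt n = 5 * of_int (F (n div 2)) \<and>
        r * mu n + s * (mu n + nu n) = 1 \<and> hh n r s = - 2 * of_int (F (n div 2))"
proof -
  define a b where "a = F j" and "b = F (j+1)"
  note B = basics[OF ej, folded a_def b_def]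
  have e1: "n div 2 = j+2" "n div 2 - 1 = j+1" "n div 2 - 2 = j" "n - 2 = 2*j+2" "n-1 = 2*j+3"
    using n by auto
  have f3: "F (2*j+3) = F (2*j+1) + F (2*j+2)" by (rule fibs3) simp_all
  have f4: "F (2*j+4) = F (2*j+2) + F (2*j+3)" by (rule fibs3) simp_all
  have f5: "F (2*j+5) = F (2*j+3) + F (2*j+4)" by (rule fibs3) simp_all
  have Ln: "lucas n = 2 * F (2*j+5) - F (2*j+4)" using lucas_F[of n] n by (simp add: ac_simps)
  define d P Q T where "d = a+b" and "P = 2*b-a" and "Q = 2*a+b" and "T = 5*(a+b)"
  have cass: "(a+b)*a - b^2 = -1" by (rule B(2))
  have x: "F (n-2) + 1 = d*P" unfolding e1 B(4) d_def P_def using cass by algebra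
  have y: "F (n-1) - 1 = d*Q" unfolding e1 f3 B(3) B(4) d_def Q_def using cass by algebra
  have bez: "(-a)*P + (b-a)*Q = 1" unfolding P_def Q_def using cass by algebra
  have D: "dd n = d" unfolding dd_def using gcd_bez[OF x y bez] d_def B(5) a_def by simp
  have dpos: "d > 0" using d_def B(5) a_def by simp
  have m1: "(-1::int)^n = 1" using n ej by simp
  have Tn: "lucas n - 1 - (-1)^n = d*T" unfolding m1 Ln f5 f4 f3 B(3) B(4) d_def T_def
    using cass by algebra
  have M: "mu n = of_int Q" unfolding mu_def D y using dpos by simp
  have N: "nu n = of_int P" unfolding nu_def D x using dpos by simp
  have Tt: "tt n = of_int T" unfolding tt_def D Tn using dpos by simp
  have I1: "b*Q + (-a)*(Q+P) = 1" using bez by algebra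
  have I2: "- ((-a)*Q + b*P) * d = -2 * (a+b)" unfolding P_def Q_def d_def using cass by algebra
  have R1: "of_int b * of_int Q + - of_int a * (of_int Q + of_int P) = (1::rat)"
    using arg_cong[OF I1, of "of_int :: int \<Rightarrow> rat"] by simp
  have R2: "- (- of_int a * of_int Q + of_int b * of_int P) * of_int d = - 2 * (of_int (a+b)::rat)"
    using arg_cong[OF I2, of "of_int :: int \<Rightarrow> rat"] by simp
  show ?thesis unfolding Let_def hh_def e1 D M N Tt B(1)[symmetric] a_def[symmetric] b_def[symmetric]
    using R1 R2 by (simp add: d_def T_def a_def b_def)
qed

lemma case2:
  assumes n: "n = 2*j+6" and ej: "even j"
  shows "let r = of_int (F (n div 2 - 2)); s = - of_int (F (n div 2 - 3)) in
        dd n = lucas (n div 2) \<and> tt n = of_int (lucas (n div 2)) \<and>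
        r * mu n + s * (mu n + nu n) = 1 \<and> hh n r s = - of_int (lucas (n div 2))"
proof -
  define a b where "a = F j" and "b = F (j+1)"
  note B = basics[OF ej, folded a_def b_def]
  have e1: "n div 2 = j+3" "n div 2 - 2 = j+1" "n div 2 - 3 = j" "n - 2 = 2*j+4" "n-1 = 2*j+5"
    using n by auto
  have g3: "F (j+3) = a + 2*b" using fibs3[of "j+3" "j+1" "j+2"] B(1) b_def by simp
  have g4: "F (j+4) = 2*a + 3*b" using fibs3[of "j+4" "j+2" "j+3"] B(1) g3 by simp
  have f3: "F (2*j+3) = F (2*j+1) + F (2*j+2)" by (rule fibs3) simp_all
  have f4: "F (2*j+4) = F (2*j+2) + F (2*j+3)" by (rule fibs3) simp_all
  have f5: "F (2*j+5) = F (2*j+3) + F (2*j+4)" by (rule fibs3) simp_all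
  have f6: "F (2*j+6) = F (2*j+4) + F (2*j+5)" by (rule fibs3) simp_all
  have f7: "F (2*j+7) = F (2*j+5) + F (2*j+6)" by (rule fibs3) simp_all
  have Ln: "lucas n = 2 * F (2*j+7) - F (2*j+6)" using lucas_F[of n] n by (simp add: ac_simps)
  define d P Q where "d = 3*a+4*b" and "P = b" and "Q = a+b"
  have Ld: "lucas (j+3) = d" using lucas_F[of "j+3"] g3 g4 d_def by (simp add: ac_simps)
  have cass: "(a+b)*a - b^2 = -1" by (rule B(2))
  have x: "F (n-2) + 1 = d*P" unfolding e1 f4 f3 B(3) B(4) d_def P_def using cass by algebra
  have y: "F (n-1) - 1 = d*Q" unfolding e1 f5 f4 f3 B(3) B(4) d_def Q_def using cass by algebra
  have bez: "(-a)*P + (b-a)*Q = 1" unfolding P_def Q_def using cass by algebra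
  have dpos: "d > 0" using d_def B(5) a_def by simp
  have D: "dd n = d" unfolding dd_def using gcd_bez[OF x y bez] dpos by simp
  have m1: "(-1::int)^n = 1" using n ej by simp
  have Tn: "lucas n - 1 - (-1)^n = d*d" unfolding m1 Ln f7 f6 f5 f4 f3 B(3) B(4) d_def
    using cass by algebra
  have M: "mu n = of_int Q" unfolding mu_def D y using dpos by simp
  have N: "nu n = of_int P" unfolding nu_def D x using dpos by simp
  have Tt: "tt n = of_int d" unfolding tt_def D Tn using dpos by simp
  have I1: "b*Q + (-a)*(Q+P) = 1" using bez by algebra
  have I2: "- ((-a)*Q + b*P) * d = - d" unfolding P_def Q_def d_def using cass by algebra
  have R1: "of_int b * of_int Q + - of_int a * (of_int Q + of_int P) = (1::rat)"
    using arg_cong[OF I1, of "of_int :: int \<Rightarrow> rat"] by simp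
  have R2: "- (- of_int a * of_int Q + of_int b * of_int P) * of_int d = - (of_int d::rat)"
    using arg_cong[OF I2, of "of_int :: int \<Rightarrow> rat"] by simp
  show ?thesis unfolding Let_def hh_def e1 D M N Tt Ld a_def[symmetric] b_def[symmetric]
    using R1 R2 by (simp add: a_def b_def)
qed

lemma case34:
  assumes n: "n = j+3" and ej: "even j"
  shows "(\<not> 3 dvd n \<longrightarrow>
      (let r = (of_int (F (n - 2)) - 1) / 2; s = (1 - of_int (F (n - 3))) / 2 in
        dd n = 1 \<and> tt n = of_int (lucas n) \<and>
        r * mu n + s * (mu n + nu n) = 1 \<and> hh n r s = (1 - of_int (lucas (n - 2))) / 2))
  \<and> (3 dvd n \<longrightarrow>
      (let r = of_int (F (n - 2)) - 1; s = 1 - of_int (F (n - 3)) in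
        dd n = 2 \<and> tt n = of_int (lucas n) / 2 \<and>
        r * mu n + s * (mu n + nu n) = (1::rat) \<and> hh n r s = 1 - of_int (lucas (n - 2))))"
proof -
  define a b where "a = F j" and "b = F (j+1)"
  note B = basics[OF ej, folded a_def b_def]
  have e1: "n - 2 = j+1" "n - 1 = j+2" "n - 3 = j" using n by auto
  have g3: "F (j+3) = a + 2*b" using fibs3[of "j+3" "j+1" "j+2"] B(1) b_def by simp
  have g4: "F (j+4) = 2*a + 3*b" using fibs3[of "j+4" "j+2" "j+3"] B(1) g3 by simp
  have Ln: "lucas n = 3*a + 4*b" using lucas_F[of "j+3"] g3 g4 n by (simp add: ac_simps)
  have Ln2: "lucas (n-2) = 2*a + b" using lucas_F[of "j+1"] B(1) e1 b_def by (simp add: ac_simps)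
  have cass: "(a+b)*a - b^2 = -1" by (rule B(2))
  define x y where "x = b + 1" and "y = a+b-1"
  have x: "F (n-2) + 1 = x" unfolding e1 x_def b_def by simp
  have y: "F (n-1) - 1 = y" unfolding e1 y_def B(1) by simp
  have two: "(1-a)*x + (b-a)*y = 2" unfolding x_def y_def using cass by algebra
  have m1: "(-1::int)^n = -1" using n ej by simp
  have Tn: "lucas n - 1 - (-1)^n = lucas n" unfolding m1 by simp
  have Fa: "F (n-3) = a" unfolding e1 a_def by simp
  have Fb: "F (n-2) = b" unfolding e1 b_def by simp
  show ?thesis
  proof (intro conjI impI)
    assume n3: "\<not> 3 dvd n"
    have "3 dvd (j+1) \<or> 3 dvd (j+2)" using n3 n by presburger
    then have oxy: "odd x \<or> odd y"
    proof
      assume "3 dvd (j+1)"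
      then have "even (fib (j+1))" using fib_even3 by blast
      then have "even b" unfolding b_def by simp
      then show ?thesis unfolding x_def by simp
    next
      assume "3 dvd (j+2)"
      then have "even (fib (j+2))" using fib_even3 by blast
      then have "even (a+b)" using B(1) by (metis even_of_nat)
      then show ?thesis unfolding y_def by simp
    qed
    have "gcd x y dvd (1-a)*x + (b-a)*y" by simp
    then have g2: "gcd x y dvd 2" unfolding two .
    have godd: "odd (gcd x y)" using oxy by (meson dvd_trans gcd_dvd1 gcd_dvd2)
    have "gcd x y \<le> 2" using g2 zdvd_imp_le by simp
    moreover have "gcd x y \<ge> 0" by simp
    ultimately have g1: "gcd x y = 1" using godd
      by (smt (verit) dvd_refl even_zero)
    have D: "dd n = 1" unfolding dd_def x y g1 by simp
    have M: "mu n = of_int y" unfolding mu_def D y by simp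
    have N: "nu n = of_int x" unfolding nu_def D x by simp
    have Tt: "tt n = of_int (lucas n)" unfolding tt_def D Tn by simp
    have "(b-1)*y + (1-a)*(y+x) = (1-a)*x + (b-a)*y" by (simp add: algebra_simps)
    then have I1: "(b-1)*y + (1-a)*(y+x) = 2" using two by simp
    have I2: "- ((1-a)*y + (b-1)*x) = 1 - (2*a+b)" unfolding x_def y_def using cass by algebra
    have R1: "(of_int b - 1) * of_int y + (1 - of_int a) * (of_int y + of_int x) = (2::rat)"
      using arg_cong[OF I1, of "of_int :: int \<Rightarrow> rat"] by simp
    have R2: "- ((1 - of_int a) * of_int y + (of_int b - 1) * of_int x) = (1 - of_int (2*a+b) :: rat)"
      using arg_cong[OF I2, of "of_int :: int \<Rightarrow> rat"] by simp
    show "let r = (of_int (F (n - 2)) - 1) / 2; s = (1 - of_int (F (n - 3))) / 2 in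
        dd n = 1 \<and> tt n = of_int (lucas n) \<and>
        r * mu n + s * (mu n + nu n) = 1 \<and> hh n r s = (1 - of_int (lucas (n - 2))) / 2"
      unfolding Let_def hh_def D M N Tt Fa Fb Ln2
    proof (intro conjI)
      show "(rat_of_int b - 1) / 2 * rat_of_int y + (1 - rat_of_int a) / 2 * (rat_of_int y + rat_of_int x) = 1"
        using R1 by (simp add: field_simps)
      show "- ((1 - rat_of_int a) / 2 * rat_of_int y + (rat_of_int b - 1) / 2 * rat_of_int x) * rat_of_int 1 =
          (1 - rat_of_int (2 * a + b)) / 2"
        using R2 by (simp add: field_simps)
    qed simp_all
  next
    assume n3: "3 dvd n"
    have "3 dvd j" using n3 n by presburger
    then have "\<not> 3 dvd (j+1)" "\<not> 3 dvd (j+2)" by presburger+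
    then have "odd (fib (j+1))" "odd (fib (j+2))" using fib_even3 by blast+
    then have "odd b" "odd (a+b)" using B(1) unfolding b_def by (simp, metis even_of_nat)
    then obtain P Q where xP: "x = 2*P" and yQ: "y = 2*Q" unfolding x_def y_def
      by (metis dvd_def even_add even_diff odd_one)
    have "2*((1-a)*P + (b-a)*Q) = 2" using two unfolding xP yQ by (simp add: algebra_simps)
    then have bez: "(1-a)*P + (b-a)*Q = 1" by simp
    have D: "dd n = 2" unfolding dd_def x y using gcd_bez[OF xP yQ bez] by simp
    have M: "mu n = of_int Q" unfolding mu_def D y yQ by simp
    have N: "nu n = of_int P" unfolding nu_def D x xP by simp
    have Tt: "tt n = of_int (lucas n) / 2" unfolding tt_def D Tn by simp
    have "(b-1)*Q + (1-a)*(Q+P) = (1-a)*P + (b-a)*Q" by (simp add: algebra_simps)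
    then have I1: "(b-1)*Q + (1-a)*(Q+P) = 1" using bez by simp
    have I2: "- ((1-a)*Q + (b-1)*P) * 2 = 1 - (2*a+b)" using xP yQ cass unfolding x_def y_def by algebra
    have R1: "(of_int b - 1) * of_int Q + (1 - of_int a) * (of_int Q + of_int P) = (1::rat)"
      using arg_cong[OF I1, of "of_int :: int \<Rightarrow> rat"] by simp
    have R2: "- ((1 - of_int a) * of_int Q + (of_int b - 1) * of_int P) * 2 = (1 - of_int (2*a+b) :: rat)"
      using arg_cong[OF I2, of "of_int :: int \<Rightarrow> rat"] by simp
    show "let r = of_int (F (n - 2)) - 1; s = 1 - of_int (F (n - 3)) in
        dd n = 2 \<and> tt n = of_int (lucas n) / 2 \<and>
        r * mu n + s * (mu n + nu n) = (1::rat) \<and> hh n r s = 1 - of_int (lucas (n - 2))"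
      unfolding Let_def hh_def D M N Tt Fa Fb Ln2 using R1 R2 by simp
  qed
qed

theorem proposition2p3p1:
  fixes n :: nat
  assumes "n \<ge> 3"
  shows
   "(n mod 4 = 0 \<longrightarrow>
      (let r = of_int (F (n div 2 - 1)); s = - of_int (F (n div 2 - 2)) in
        dd n = F (n div 2) \<and> tt n = 5 * of_int (F (n div 2)) \<and>
        r * mu n + s * (mu n + nu n) = 1 \<and> hh n r s = - 2 * of_int (F (n div 2))))
  \<and> (n mod 4 = 2 \<longrightarrow>
      (let r = of_int (F (n div 2 - 2)); s = - of_int (F (n div 2 - 3)) in
        dd n = lucas (n div 2) \<and> tt n = of_int (lucas (n div 2)) \<and>
        r * mu n + s * (mu n + nu n) = 1 \<and> hh n r s = - of_int (lucas (n div 2))))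
  \<and> (n mod 12 \<in> {1, 5, 7, 11} \<longrightarrow>
      (let r = (of_int (F (n - 2)) - 1) / 2; s = (1 - of_int (F (n - 3))) / 2 in
        dd n = 1 \<and> tt n = of_int (lucas n) \<and>
        r * mu n + s * (mu n + nu n) = 1 \<and> hh n r s = (1 - of_int (lucas (n - 2))) / 2))
  \<and> (n mod 12 \<in> {3, 9} \<longrightarrow>
      (let r = of_int (F (n - 2)) - 1; s = 1 - of_int (F (n - 3)) in
        dd n = 2 \<and> tt n = of_int (lucas n) / 2 \<and>
        r * mu n + s * (mu n + nu n) = (1::rat) \<and> hh n r s = 1 - of_int (lucas (n - 2))))"
  proof (intro conjI impI)
  assume h: "n mod 4 = 0"
  have "n = 2*(n div 2 - 2) + 4" "even (n div 2 - 2)" using h assms by presburger+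
  from case1[OF this] show "let r = of_int (F (n div 2 - 1)); s = - of_int (F (n div 2 - 2)) in
        dd n = F (n div 2) \<and> tt n = 5 * of_int (F (n div 2)) \<and>
        r * mu n + s * (mu n + nu n) = 1 \<and> hh n r s = - 2 * of_int (F (n div 2))" .
next
  assume h: "n mod 4 = 2"
  have "n = 2*(n div 2 - 3) + 6" "even (n div 2 - 3)" using h assms by presburger+
  from case2[OF this] show "let r = of_int (F (n div 2 - 2)); s = - of_int (F (n div 2 - 3)) in
        dd n = lucas (n div 2) \<and> tt n = of_int (lucas (n div 2)) \<and>
        r * mu n + s * (mu n + nu n) = 1 \<and> hh n r s = - of_int (lucas (n div 2))" .
next
  assume h: "n mod 12 \<in> {1, 5, 7, 11}"
  have "n mod 12 = 1 \<or> n mod 12 = 5 \<or> n mod 12 = 7 \<or> n mod 12 = 11" using h by simp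
  then have "n = (n - 3) + 3 \<and> even (n - 3) \<and> \<not> 3 dvd n" using assms by presburger
  then have "n = (n - 3) + 3" "even (n - 3)" "\<not> 3 dvd n" by blast+
  from case34[OF this(1,2)] this(3) show "let r = (of_int (F (n - 2)) - 1) / 2; s = (1 - of_int (F (n - 3))) / 2 in
        dd n = 1 \<and> tt n = of_int (lucas n) \<and>
        r * mu n + s * (mu n + nu n) = 1 \<and> hh n r s = (1 - of_int (lucas (n - 2))) / 2" by blast
next
  assume h: "n mod 12 \<in> {3, 9}"
  have "n mod 12 = 3 \<or> n mod 12 = 9" using h by simp
  then have "n = (n - 3) + 3 \<and> even (n - 3) \<and> 3 dvd n" using assms by presburger
  then have "n = (n - 3) + 3" "even (n - 3)" "3 dvd n" by blast+
  from case34[OF this(1,2)] this(3) show "let r = of_int (F (n - 2)) - 1; s = 1 - of_int (F (n - 3)) in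
        dd n = 2 \<and> tt n = of_int (lucas n) / 2 \<and>
        r * mu n + s * (mu n + nu n) = (1::rat) \<and> hh n r s = 1 - of_int (lucas (n - 2))" by blast
qed

end
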